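(* Let $(n,w)$ be a $\{0,1\}$-instance of TSP with $n\ge1$ and $w(K_n)=d\binom n2$ for some $d\in[0,1]$ satisfying $n^{-1}\le d\le 1-4n^{-1}$. Then there exists an optimal matching $M^*$ of $K_n$ with $w(M^* )\le f(n,d)$, where $$f(n,d)=\begin{cases}\tfrac12 dn-\tfrac18 dn+1 & \text{if } d\le \tfrac{9}{25},\\ \tfrac12 dn-\tfrac18(1-d)^2n+1 & \text{if } d\ge\tfrac{9}{25}.\end{cases}$$
   Context: $K_n=(V_n,E_n)$ is the complete graph on $n$ vertices; a $\{0,1\}$-instance is a weighting $w:E_n\to\{0,1\}$; $w(G)=\sum_{e\in E(G)}w(e)$. An optimal matching of $K_n$ is any set of $\lfloor n/2\rfloor$ pairwise disjoint edges of $K_n$. *)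

theory Defs
  imports Complex_Main
begin

definition Kn_edges :: "nat \<Rightarrow> nat set set" where
  "Kn_edges n = {e. e \<subseteq> {..<n} \<and> card e = 2}"

definition zero_one_instance :: "nat \<Rightarrow> (nat set \<Rightarrow> nat) \<Rightarrow> bool" where
  "zero_one_instance n w \<longleftrightarrow> (\<forall>e \<in> Kn_edges n. w e \<in> {0, 1})"

definition weight :: "(nat set \<Rightarrow> nat) \<Rightarrow> nat set set \<Rightarrow> nat" where
  "weight w F = (\<Sum>e\<in>F. w e)"

definition optimal_matching :: "nat \<Rightarrow> nat set set \<Rightarrow> bool" where
  "optimal_matching n M \<longleftrightarrow> M \<subseteq> Kn_edges n \<and> card M = n div 2 \<and>
     (\<forall>e\<in>M. \<forall>f\<in>M. e \<noteq> f \<longrightarrow> e \<inter> f = {})"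

definition f_bound :: "nat \<Rightarrow> real \<Rightarrow> real" where
  "f_bound n d = (if d \<le> 9/25 then 1/2 * d * n - 1/8 * d * n + 1
                  else 1/2 * d * n - 1/8 * (1 - d)^2 * n + 1)"

end

theory Submission
  imports Defs
begin


lemma arith_L1:
  fixes U V Q :: real
  shows "U*(U-1)/2 + Q*U + (V-Q)*(2*U-2) + Q*(Q-1)/2 \<ge> U*(U-1)/2 + 2*V*(U-1) - (2*U-3)^2/8"
proof -
  have "U*(U-1)/2 + Q*U + (V-Q)*(2*U-2) + Q*(Q-1)/2 - (U*(U-1)/2 + 2*V*(U-1) - (2*U-3)^2/8)
        = (Q - U + 3/2)^2/2" by (simp add: power2_eq_square field_simps)
  moreover have "(Q - U + 3/2)^2/2 \<ge> 0" by simp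
  ultimately show ?thesis by linarith
qed

lemma arith_L2:
  fixes U V Q :: real
  assumes "0 \<le> Q" "Q \<le> V" "V \<le> U - 3/2"
  shows "U*(U-1)/2 + Q*U + (V-Q)*(2*U-2) + Q*(Q-1)/2 \<ge> (U+V)*(U+V-1)/2"
proof -
  have "U*(U-1)/2 + Q*U + (V-Q)*(2*U-2) + Q*(Q-1)/2 - (U+V)*(U+V-1)/2
        = (V-Q)*(2*U-3-Q-V)/2" by (simp add: field_simps)
  moreover have "(V-Q)*(2*U-3-Q-V) \<ge> 0" using assms by (intro mult_nonneg_nonneg) auto
  ultimately show ?thesis by linarith
qed

lemma caseA:
  fixes N U V Q d :: real
  assumes hN: "N = 2*V + U" "0 \<le> Q" "Q \<le> V" "0 \<le> U" "N \<ge> 5" "d \<le> 9/25" "0 \<le> d"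
  and hP: "d*(N*(N-1)/2) \<ge> U*(U-1)/2 + Q*U + (V-Q)*(2*U-2) + Q*(Q-1)/2"
  shows "U \<le> 3/4*d*N + 2"
proof (rule ccontr)
  assume c: "\<not> ?thesis"
  have "d*N \<ge> 0" using hN by simp
  moreover have "U > 3/4*(d*N)+2" using c by (simp add: mult.assoc)
  ultimately have U2: "U > 2" "3*(d*N) < 4*U - 8" by linarith+
  have Pl: "3*(d*N)*(N-1) < (4*U-8)*(N-1)"
    using U2 hN by (intro mult_strict_right_mono) auto
  have Pe: "6*(d*(N*(N-1)/2)) = 3*(d*N)*(N-1)" by (simp add: field_simps)
  show False
  proof (cases "V \<ge> U - 3/2")
    case True
    have L1: "6*(U*(U-1)/2 + 2*V*(U-1) - (2*U-3)^2/8) - (4*U-8)*(N-1)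
        = -4*U^2+18*U-59/4 + 4*(V*(U+1))" using hN(1) by (simp add: power2_eq_square field_simps)
    have "V*(U+1) \<ge> (U-3/2)*(U+1)" using True U2 by (intro mult_right_mono) auto
    moreover have "(U-3/2)*(U+1) = U^2 - U/2 - 3/2" by (simp add: power2_eq_square algebra_simps)
    ultimately have "-4*U^2+18*U-59/4 + 4*(V*(U+1)) > 0" using U2 by linarith
    hence pos: "6*(U*(U-1)/2 + 2*V*(U-1) - (2*U-3)^2/8) - (4*U-8)*(N-1) > 0" using L1 by simp
    have lin2: "\<And>A K P R B :: real. 6*A - K > 0 \<Longrightarrow> R < K \<Longrightarrow> 6*P = R \<Longrightarrow> B \<le> P \<Longrightarrow> A \<le> B \<Longrightarrow> False"
      by linarith
    show False by (rule lin2[OF pos Pl Pe hP arith_L1[of U V Q]])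
  next
    case False
    define S where "S = U+V"
    have VU: "V \<le> U - 3/2" using False by simp
    have B: "d*(N*(N-1)/2) \<ge> S*(S-1)/2" using hP arith_L2[OF hN(2) hN(3) VU] unfolding S_def by linarith
    have "N*(N-1) \<ge> 0" using hN by simp
    hence "d*(N*(N-1)/2) \<le> 9/25*(N*(N-1)/2)" using hN(6) by (intro mult_right_mono) auto
    with B have C: "25*(S*(S-1)) \<le> 9*(N*(N-1))" by linarith
    have "6*U + 6*V > 4*N+3" using False hN by linarith
    hence sN: "6*S > 4*N+3" unfolding S_def by (simp add: algebra_simps)
    define A where "A = (4*N+3)/6"
    have f1: "S - A > 0" using sN unfolding A_def by (simp add: field_simps)
    have f2: "S + A - 1 > 0" using sN hN unfolding A_def by (simp add: field_simps)
    have "S*(S-1) - A*(A-1) = (S - A)*(S + A - 1)" by (simp add: algebra_simps)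
    moreover have "(S - A)*(S + A - 1) > 0" using f1 f2 by (intro mult_pos_pos)
    ultimately have "S*(S-1) > A*(A-1)" by linarith
    with C have "25*(A*(A-1)) < 9*(N*(N-1))" by linarith
    moreover have "25*(A*(A-1)) = 100/9*(N*N) - 25/4" unfolding A_def by (simp add: field_simps)
    moreover have "9*(N*(N-1)) = 9*(N*N) - 9*N" by (simp add: algebra_simps)
    moreover have "N*N \<ge> 5*5" using hN by (intro mult_mono) auto
    ultimately show False using hN by linarith
  qed
qed

lemma caseB:
  fixes N U V Q d :: real
  assumes hN: "N = 2*V + U" "0 \<le> Q" "Q \<le> V" "0 \<le> U" "N \<ge> 5" "d > 9/25" "d \<le> 1"
    "V = 0 \<or> V \<ge> 1"
  and hP: "d*(N*(N-1)/2) \<ge> U*(U-1)/2 + Q*U + (V-Q)*(2*U-2) + Q*(Q-1)/2"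
  shows "U \<le> d*N - (1-d)^2*N/4 + 2"
proof (cases "V \<ge> U - 3/2")
  case True
  hence N3: "N \<ge> 3*U - 3" using hN by linarith
  show ?thesis
  proof (cases "d \<ge> 1/2")
    case True
    have "(1-d)^2 \<le> (1/2)^2" by (rule power_mono) (use True hN in auto)
    hence "(1-d)^2 \<le> 1/4" by (simp add: power2_eq_square)
    hence "(1-d)^2*N \<le> (1/4)*N" using hN by (intro mult_right_mono) auto
    moreover have "d*N \<ge> (1/2)*N" using True hN by (intro mult_right_mono) auto
    ultimately show ?thesis using N3 hN by linarith
  next
    case False
    have "(d - 9/25)*(16/25 - d) \<ge> 0" using False hN by (intro mult_nonneg_nonneg) auto
    moreover have "(d - 9/25)*(16/25 - d) = d - d*d - 144/625" by (simp add: algebra_simps)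
    moreover have "(1-d)^2 = 1 - 2*d + d*d" by (simp add: power2_eq_square algebra_simps)
    ultimately have g: "d - (1-d)^2/4 \<ge> 5*d/4 - 1/5" by linarith
    have gN: "d*N - (1-d)^2*N/4 \<ge> (5*d/4 - 1/5)*N"
    proof -
      have "(5*d/4 - 1/5)*N \<le> (d - (1-d)^2/4)*N" using g hN by (intro mult_right_mono) auto
      thus ?thesis by (simp add: algebra_simps)
    qed
    show ?thesis
    proof (cases "U - 2 \<le> N/4")
      case True
      have "(5*d/4 - 1/5)*N \<ge> (1/4)*N" using hN by (intro mult_right_mono) auto
      thus ?thesis using gN True by linarith
    next
      case False
      define a where "a = N/4 + 2"
      define b where "b = (N+3)/3"
      have ab: "U \<ge> a" "U \<le> b" using False N3 unfolding a_def b_def by auto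
      have Q8: "-200*U^2 + 120*N*U - 16*N^2 - 24*N + 480*U - 385
         = 200*((U-a)*(b-U)) + (10/3)*(N*(U-a)) - 120*(U-a) + 3/2*N^2 + 136*N - 225"
        unfolding a_def b_def by (simp add: power2_eq_square field_simps)
      have p1: "(U-a)*(b-U) \<ge> 0" using ab by (intro mult_nonneg_nonneg) auto
      have p2: "N*(U-a) \<ge> 0" using ab hN by (intro mult_nonneg_nonneg) auto
      have p3: "U - a \<le> N/12 - 1" using ab unfolding a_def b_def by auto
      have p4: "N^2 \<ge> 0" by simp
      have lin: "\<And>X Y Z N2 :: real. X \<ge> 0 \<Longrightarrow> Y \<ge> 0 \<Longrightarrow> Z \<le> N/12 - 1 \<Longrightarrow> N2 \<ge> 0
          \<Longrightarrow> 0 \<le> 200*X + (10/3)*Y - 120*Z + 3/2*N2 + 136*N - 225" using hN by linarith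
      have "0 \<le> 200*((U-a)*(b-U)) + (10/3)*(N*(U-a)) - 120*(U-a) + 3/2*N^2 + 136*N - 225"
        by (rule lin[OF p1 p2 p3 p4])
      hence Q8pos: "-200*U^2 + 120*N*U - 16*N^2 - 24*N + 480*U - 385 \<ge> 0"
        by (simp only: Q8)
      have L1: "d*(N*(N-1)/2) \<ge> U*(U-1)/2 + 2*V*(U-1) - (2*U-3)^2/8"
        using hP arith_L1[of U V Q] by linarith
      have id8: "8*(25*(U*(U-1)/2 + 2*V*(U-1) - (2*U-3)^2/8) - 10*((N-1)*(U-2)) - 2*(N*(N-1)))
         = -200*U^2 + 120*N*U - 16*N^2 - 24*N + 480*U - 385"
        using hN(1) by (simp add: power2_eq_square field_simps)
      have lin3: "\<And>A P K1 K2 X :: real. 8*(25*A - 10*K1 - 2*K2) = X \<Longrightarrow> X \<ge> 0 \<Longrightarrow> A \<le> P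
          \<Longrightarrow> 25*P \<ge> 10*K1 + 2*K2" by (smt (z3))
      have c1: "25*(d*(N*(N-1)/2)) \<ge> 10*((N-1)*(U-2)) + 2*(N*(N-1))"
        by (rule lin3[OF id8 Q8pos L1])
      have e1: "25*(d*(N*(N-1)/2)) = (N-1)*(25*d*N/2)" by (simp add: field_simps)
      have e2: "10*((N-1)*(U-2)) + 2*(N*(N-1)) = (N-1)*(10*(U-2) + 2*N)" by (simp add: algebra_simps)
      have "(N-1)*(25*d*N/2) \<ge> (N-1)*(10*(U-2) + 2*N)" using c1 unfolding e1 e2 .
      hence "25*d*N/2 \<ge> 10*(U-2) + 2*N" using hN by (subst (asm) mult_le_cancel_left) auto
      hence "(5*d/4 - 1/5)*N \<ge> U - 2" by (simp add: algebra_simps)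
      thus ?thesis using gN by linarith
    qed
  qed
next
  case False
  have VU: "V \<le> U - 3/2" using False by simp
  have B: "d*(N*(N-1)/2) \<ge> (U+V)*(U+V-1)/2" using hP arith_L2[OF hN(2) hN(3) VU] by linarith
  define e where "e = 1 - d"
  define e' where "e' = V*(2*N-1-V)/(N*(N-1))"
  have NN: "N*(N-1) > 0" using hN by simp
  have "(U+V)*(U+V-1) = N*(N-1) - V*(2*N-1-V)" using hN(1) by (simp add: algebra_simps)
  with B have "d*(N*(N-1)) \<ge> N*(N-1) - V*(2*N-1-V)" by simp
  hence "e*(N*(N-1)) \<le> V*(2*N-1-V)" unfolding e_def by (simp add: algebra_simps)
  hence ee: "e \<le> e'" unfolding e'_def using NN by (simp add: pos_le_divide_eq)
  have e0: "e \<ge> 0" unfolding e_def using hN by simp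
  have "e^2 \<le> e'^2" using ee e0 by (intro power_mono) auto
  hence m1: "e*N + e^2*N/4 \<le> e'*N + e'^2*N/4" using ee hN
    by (intro add_mono divide_right_mono mult_right_mono) auto
  have VN: "V \<le> N/2" using hN by linarith
  have key: "V^2*(2*N-1-V)^2 \<le> 8*N*(N-1)^2 + 4*N*(N-1)*V*(V-1)"
  proof -
    have id: "8*N*(N-1)^2 + 4*N*(N-1)*V*(V-1) - V^2*(2*N-1-V)^2
       = 4*N*(N-1)*(2*(N-1) - V) + V^2*(V*(4*N-2-V) - 1)"
      by (simp add: power2_eq_square algebra_simps)
    have a1: "4*N*(N-1)*(2*(N-1) - V) \<ge> 0" using hN VN by (intro mult_nonneg_nonneg) auto
    have a2: "V^2*(V*(4*N-2-V) - 1) \<ge> 0"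
    proof (cases "V = 0")
      case False
      hence "V \<ge> 1" using hN by auto
      hence "V*(4*N-2-V) \<ge> 1*1" using VN hN by (intro mult_mono) auto
      thus ?thesis by simp
    qed simp
    show ?thesis using id a1 a2 by linarith
  qed
  have "e'*N + e'^2*N/4 \<le> 2*V + 2"
  proof -
    define D where "D = N*(N-1)"
    define W where "W = V*(2*N-1-V)"
    have D0: "D > 0" using NN unfolding D_def .
    have ed: "e' = W/D" unfolding e'_def D_def W_def ..
    have "e'*N + e'^2*N/4 = ((4*D*W + W^2)*N)/(4*D^2)" unfolding ed using D0
      by (simp add: power2_eq_square field_simps)
    also have "\<dots> \<le> 2*V + 2"
    proof -
      have i1: "4*D*W + W^2 = 4*N*(N-1)*(V*(2*N-1-V)) + V^2*(2*N-1-V)^2"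
        unfolding D_def W_def by (simp add: power2_eq_square algebra_simps)
      have i2: "4*N*(N-1)*(V*(2*N-1-V)) = 8*N*(N-1)^2*V - 4*N*(N-1)*V*(V-1)"
        by (simp add: power2_eq_square algebra_simps)
      have "4*D*W + W^2 \<le> 8*N*(N-1)^2*(V+1)"
        using key i1 i2 by (simp add: algebra_simps)
      hence "(4*D*W + W^2)*N \<le> (8*N*(N-1)^2*(V+1))*N" using hN by (intro mult_right_mono) auto
      also have "\<dots> = (2*V+2)*(4*D^2)" unfolding D_def by (simp add: power2_eq_square algebra_simps)
      finally have "(4*D*W + W^2)*N \<le> (2*V+2)*(4*D^2)" .
      moreover have "4*D^2 > 0" using D0 by simp
      ultimately show ?thesis by (simp add: divide_le_eq)
    qed
    finally show ?thesis .
  qed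
  with m1 have "e*N + e^2*N/4 \<le> 2*V+2" by linarith
  thus ?thesis unfolding e_def using hN(1) by (simp add: algebra_simps)
qed


lemma real_choose2: "real (m choose 2) = real m * (real m - 1) / 2"
proof (induction m)
  case 0 then show ?case by simp
next
  case (Suc m)
  have "(Suc m) choose 2 = (m choose 1) + (m choose 2)"
    by (metis Suc_1 binomial_Suc_Suc)
  hence "real ((Suc m) choose 2) = real m + real (m choose 2)" by simp
  then show ?case using Suc by (simp add: field_simps)
qed

lemma finite_Kn: "finite (Kn_edges n)"
proof -
  have "Kn_edges n \<subseteq> Pow {..<n}" unfolding Kn_edges_def by auto
  thus ?thesis by (rule finite_subset) simp
qed

lemma Kn_edges_iff: "e \<in> Kn_edges n \<longleftrightarrow> (\<exists>x y. e = {x,y} \<and> x \<noteq> y \<and> x < n \<and> y < n)"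
  unfolding Kn_edges_def card_2_iff by auto

lemma doubleton_Kn: "x \<noteq> y \<Longrightarrow> x < n \<Longrightarrow> y < n \<Longrightarrow> {x,y} \<in> Kn_edges n"
  unfolding Kn_edges_iff by blast

definition hmatch :: "nat \<Rightarrow> (nat set \<Rightarrow> nat) \<Rightarrow> nat set set \<Rightarrow> bool" where
  "hmatch n w N \<longleftrightarrow> N \<subseteq> Kn_edges n \<and> (\<forall>e\<in>N. w e = 0) \<and>
     (\<forall>e\<in>N. \<forall>f\<in>N. e \<noteq> f \<longrightarrow> e \<inter> f = {})"

lemma aug:
  assumes hm: "hmatch n w N" and R: "R \<subseteq> N" and A: "A \<subseteq> Kn_edges n" "\<forall>a\<in>A. w a = 0"
    "\<forall>a\<in>A. \<forall>b\<in>A. a \<noteq> b \<longrightarrow> a \<inter> b = {}" "\<forall>a\<in>A. \<forall>f\<in>N-R. a \<inter> f = {}"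
    and fA: "finite A" and c: "card R < card A"
  shows "hmatch n w ((N - R) \<union> A) \<and> card N < card ((N - R) \<union> A)"
proof
  have fN: "finite N" using hm finite_Kn unfolding hmatch_def by (auto intro: finite_subset)
  have ne: "\<forall>a\<in>A. a \<noteq> {}" using A(1) unfolding Kn_edges_def by auto
  have dis: "(N - R) \<inter> A = {}"
  proof (rule ccontr)
    assume "(N - R) \<inter> A \<noteq> {}"
    then obtain a where a: "a \<in> N - R" "a \<in> A" by blast
    have "a \<inter> a = {}" using A(4) a by blast
    thus False using ne a by simp
  qed
  have "card ((N - R) \<union> A) = card (N - R) + card A"
    using dis fN fA by (intro card_Un_disjoint) auto
  moreover have "card (N - R) = card N - card R" using R fN by (intro card_Diff_subset) (auto intro: finite_subset)
  moreover have "card R \<le> card N" using R fN by (intro card_mono)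
  ultimately show "card N < card ((N - R) \<union> A)" using c by linarith
  show "hmatch n w ((N - R) \<union> A)"
    unfolding hmatch_def
  proof (intro conjI ballI impI)
    show "N - R \<union> A \<subseteq> Kn_edges n" using hm A(1) unfolding hmatch_def by blast
    show "w e = 0" if "e \<in> N - R \<union> A" for e using that hm A(2) unfolding hmatch_def by blast
    show "e \<inter> f = {}" if ef: "e \<in> N - R \<union> A" "f \<in> N - R \<union> A" "e \<noteq> f" for e f
    proof -
      consider "e \<in> N - R" "f \<in> N - R" | "e \<in> N - R" "f \<in> A" | "e \<in> A" "f \<in> N - R" | "e \<in> A" "f \<in> A"
        using ef by blast
      then show ?thesis
      proof cases
        case 1 then show ?thesis using hm ef(3) unfolding hmatch_def by blast
      next
        case 2
        hence "f \<inter> e = {}" using A(4) by simp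
        thus ?thesis by (simp add: Int_commute)
      next
        case 3 then show ?thesis using A(4) by simp
      next
        case 4 then show ?thesis using A(3) ef(3) by simp
      qed
    qed
  qed
qed

lemma exists_pairing:
  assumes "finite S"
  shows "\<exists>P. (\<forall>p\<in>P. p \<subseteq> S \<and> card p = 2) \<and> (\<forall>p\<in>P. \<forall>p'\<in>P. p \<noteq> p' \<longrightarrow> p \<inter> p' = {})
          \<and> card P = card S div 2 \<and> finite P"
  using assms
proof (induction "card S" arbitrary: S rule: less_induct)
  case less
  show ?case
  proof (cases "card S < 2")
    case True
    then show ?thesis by (intro exI[of _ "{}"]) auto
  next
    case False
    then obtain T where "T \<subseteq> S" "card T = 2" using obtain_subset_with_card_n[of 2 S] by force
    then obtain x y where xy: "x \<in> S" "y \<in> S" "x \<noteq> y" unfolding card_2_iff by blast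
    define S' where "S' = S - {x,y}"
    have cS': "card S' = card S - 2" unfolding S'_def using xy less.prems by (simp add: card_Diff_subset)
    have fS': "finite S'" unfolding S'_def using less.prems by simp
    obtain P where P: "\<forall>p\<in>P. p \<subseteq> S' \<and> card p = 2" "\<forall>p\<in>P. \<forall>p'\<in>P. p \<noteq> p' \<longrightarrow> p \<inter> p' = {}"
      "card P = card S' div 2" "finite P"
      using less.hyps[of S', OF _ fS'] cS' False by (metis diff_less not_less order_less_le_trans pos2)
    have nin: "{x,y} \<notin> P" using P(1) xy unfolding S'_def by blast
    show ?thesis
    proof (intro exI[of _ "insert {x,y} P"] conjI)
      show "\<forall>p\<in>insert {x, y} P. p \<subseteq> S \<and> card p = 2" using P(1) xy unfolding S'_def by fastforce
      have d1: "\<forall>p\<in>P. {x,y} \<inter> p = {}" using P(1) unfolding S'_def by blast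
      show "\<forall>p\<in>insert {x, y} P. \<forall>p'\<in>insert {x, y} P. p \<noteq> p' \<longrightarrow> p \<inter> p' = {}"
      proof (intro ballI impI)
        fix p p' assume "p \<in> insert {x, y} P" "p' \<in> insert {x, y} P" "p \<noteq> p'"
        then show "p \<inter> p' = {}" using d1 P(2) by (metis Int_commute insertE)
      qed
      show "card (insert {x, y} P) = card S div 2" using nin P(3,4) cS' False by simp
      show "finite (insert {x, y} P)" using P(4) by simp
    qed
  qed
qed



lemma main_comb:
  assumes zo: "zero_one_instance n w"
  shows "\<exists>M u v q. optimal_matching n M \<and> weight w M \<le> u div 2 \<and> n = 2*v + u \<and> q \<le> v \<and>
     (u choose 2) + q*u + (v - q)*(2*u - 2) + (q choose 2) \<le> weight w (Kn_edges n)"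
proof -
  have w01: "\<And>e. e \<in> Kn_edges n \<Longrightarrow> w e = 0 \<or> w e = 1" using zo unfolding zero_one_instance_def by auto
  define HM where "HM = {N. hmatch n w N}"
  have finHM: "finite HM"
  proof -
    have "HM \<subseteq> Pow (Kn_edges n)" unfolding HM_def hmatch_def by auto
    thus ?thesis by (rule finite_subset) (simp add: finite_Kn)
  qed
  have "{} \<in> HM" unfolding HM_def hmatch_def by simp
  hence ne: "card ` HM \<noteq> {}" by blast
  have "Max (card ` HM) \<in> card ` HM" using finHM ne by (intro Max_in) auto
  then obtain N where NHM: "N \<in> HM" and cN: "card N = Max (card ` HM)" by auto
  have N: "hmatch n w N" using NHM unfolding HM_def by simp
  have Nmax: "card N' \<le> card N" if "hmatch n w N'" for N'
    using that finHM unfolding cN HM_def by (intro Max_ge) auto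
  have noaug: False if "R \<subseteq> N" "A \<subseteq> Kn_edges n" "\<forall>a\<in>A. w a = 0"
    "\<forall>a\<in>A. \<forall>b\<in>A. a \<noteq> b \<longrightarrow> a \<inter> b = {}" "\<forall>a\<in>A. \<forall>f\<in>N-R. a \<inter> f = {}"
    "finite A" "card R < card A" for R A
  proof -
    have "hmatch n w ((N - R) \<union> A) \<and> card N < card ((N - R) \<union> A)"
      using aug[OF N that] .
    with Nmax show False by (meson not_le)
  qed
  have NK: "N \<subseteq> Kn_edges n" and Nw: "\<forall>e\<in>N. w e = 0"
    and Nd: "\<forall>e\<in>N. \<forall>f\<in>N. e \<noteq> f \<longrightarrow> e \<inter> f = {}" using N unfolding hmatch_def by auto
  have finN: "finite N" using NK finite_Kn by (rule finite_subset)
  have ecard: "card e = 2" and esub: "e \<subseteq> {..<n}" if "e \<in> N" for e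
    using NK that unfolding Kn_edges_def by auto
  have efin: "finite e" if "e \<in> N" for e using ecard[OF that] card.infinite by fastforce
  define V1 where "V1 = \<Union>N"
  define U where "U = {..<n} - V1"
  have V1sub: "V1 \<subseteq> {..<n}" unfolding V1_def using esub by blast
  have finU: "finite U" unfolding U_def by simp
  have finV1: "finite V1" using V1sub finite_subset by blast
  have cardV1: "card V1 = 2 * card N"
  proof -
    have "card V1 = sum card N" unfolding V1_def
      using Nd efin by (intro card_Union_disjoint) (auto simp: pairwise_def disjnt_def)
    also have "\<dots> = sum (\<lambda>_. 2) N" using ecard by (intro sum.cong) auto
    finally show ?thesis by simp
  qed
  have nsplit: "n = 2 * card N + card U"
  proof -
    have "{..<n} = V1 \<union> U" "V1 \<inter> U = {}" unfolding U_def using V1sub by auto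
    hence "card {..<n} = card V1 + card U" using finV1 finU by (simp add: card_Un_disjoint)
    thus ?thesis using cardV1 by simp
  qed
  have inU: "x < n" "x \<notin> V1" if "x \<in> U" for x using that unfolding U_def by auto
  have inV1: "\<exists>e\<in>N. x \<in> e" if "x \<in> V1" for x using that unfolding V1_def by auto
  have eV1: "e \<subseteq> V1" if "e \<in> N" for e using that unfolding V1_def by auto
  have Ucl: "w {x,y} = 1" if "x \<in> U" "y \<in> U" "x \<noteq> y" for x y
  proof -
    have K: "{x,y} \<in> Kn_edges n" using that inU by (intro doubleton_Kn) auto
    show ?thesis
    proof (rule ccontr)
      assume "w {x,y} \<noteq> 1"
      hence w0: "w {x,y} = 0" using w01[OF K] by simp
      show False
      proof (rule noaug[of "{}" "{{x,y}}"])
        show "\<forall>a\<in>{{x, y}}. \<forall>f\<in>N - {}. a \<inter> f = {}" using that inU eV1 by blast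
      qed (use K w0 in auto)
    qed
  qed
  define X where "X v = {x\<in>U. w {v,x} = 0}" for v
  have XU: "X v \<subseteq> U" for v unfolding X_def by auto
  have finX: "finite (X v)" for v using XU finU finite_subset by blast
  \<comment> \<open>(2) no augmenting path of length 3\<close>
  have aug2: "x = y" if e: "e \<in> N" "a \<in> e" "b \<in> e" "a \<noteq> b" and xy: "x \<in> X a" "y \<in> X b" for e a b x y
  proof (rule ccontr)
    assume nxy: "x \<noteq> y"
    have xU: "x \<in> U" "y \<in> U" using xy XU by auto
    have abV: "a \<in> V1" "b \<in> V1" using e eV1 by auto
    have an: "a < n" "b < n" using e esub by auto
    have xn: "x < n" "y < n" "x \<notin> V1" "y \<notin> V1" using xU inU by auto
    have ne: "x \<noteq> a" "x \<noteq> b" "y \<noteq> a" "y \<noteq> b" using abV xn by auto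
    have wxa: "w {x,a} = 0" using xy(1) unfolding X_def by (simp add: insert_commute)
    have wyb: "w {y,b} = 0" using xy(2) unfolding X_def by (simp add: insert_commute)
    have dis: "\<forall>f\<in>N - {e}. a \<notin> f \<and> b \<notin> f \<and> x \<notin> f \<and> y \<notin> f"
    proof
      fix f assume f: "f \<in> N - {e}"
      hence "f \<inter> e = {}" using Nd e(1) by blast
      moreover have "f \<subseteq> V1" using f eV1 by blast
      ultimately show "a \<notin> f \<and> b \<notin> f \<and> x \<notin> f \<and> y \<notin> f" using e xn by blast
    qed
    show False
    proof (rule noaug[of "{e}" "{{x,a},{y,b}}"])
      show "{e} \<subseteq> N" using e by simp
      show "{{x, a}, {y, b}} \<subseteq> Kn_edges n" using ne an xn by (auto intro: doubleton_Kn)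
      show "\<forall>aa\<in>{{x, a}, {y, b}}. w aa = 0" using wxa wyb by simp
      show "\<forall>aa\<in>{{x, a}, {y, b}}. \<forall>ba\<in>{{x, a}, {y, b}}. aa \<noteq> ba \<longrightarrow> aa \<inter> ba = {}"
        using ne nxy e(4) by auto
      show "\<forall>aa\<in>{{x, a}, {y, b}}. \<forall>f\<in>N - {e}. aa \<inter> f = {}" using dis by auto
      show "finite {{x, a}, {y, b}}" by simp
      have "{x,a} \<noteq> {y,b}" using ne nxy by (auto simp: doubleton_eq_iff)
      thus "card {e} < card {{x, a}, {y, b}}" by simp
    qed
  qed
  define Q where "Q = {e\<in>N. \<exists>v\<in>e. 2 \<le> card (X v)}"
  have QN: "Q \<subseteq> N" unfolding Q_def by auto
  have edge2: "\<exists>a b. e = {a,b} \<and> a \<noteq> b" if "e \<in> N" for e using ecard[OF that] card_2_iff by metis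
  have Xle1: "card (X a) \<le> 1" if h: "e \<in> N" "a \<in> e" "b \<in> e" "a \<noteq> b" "X b \<noteq> {}" for e a b
  proof -
    obtain y where y: "y \<in> X b" using h(5) by blast
    have "X a \<subseteq> {y}" using aug2[OF h(1-4) _ y] by blast
    thus ?thesis using card_mono[of "{y}" "X a"] by simp
  qed
  have Qempty: "\<exists>v\<in>e. X v = {}" if "e \<in> Q" for e
  proof (rule ccontr)
    assume c: "\<not> ?thesis"
    have eN: "e \<in> N" using that QN by blast
    obtain a b where ab: "e = {a,b}" "a \<noteq> b" using edge2[OF eN] by blast
    have "card (X a) \<le> 1" using Xle1[of e a b] eN ab c by auto
    moreover have "card (X b) \<le> 1" using Xle1[of e b a] eN ab c by auto
    moreover obtain v where "v \<in> e" "2 \<le> card (X v)" using \<open>e \<in> Q\<close> unfolding Q_def by blast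
    ultimately show False using ab by auto
  qed
  define s where "s e = (SOME v. v \<in> e \<and> X v = {})" for e
  have sQ: "s e \<in> e" "X (s e) = {}" if "e \<in> Q" for e
    using someI_ex[OF Qempty[OF that, unfolded Bex_def]] unfolding s_def by auto
  have other: "\<exists>t. e = {s e, t} \<and> t \<noteq> s e \<and> 2 \<le> card (X t)" if h: "e \<in> Q" for e
  proof -
    obtain v where v: "v \<in> e" "2 \<le> card (X v)" using h unfolding Q_def by blast
    have vs: "v \<noteq> s e" using v(2) sQ[OF h] by auto
    have eN: "e \<in> N" using h QN by blast
    obtain a b where ab: "e = {a,b}" "a \<noteq> b" using edge2[OF eN] by blast
    have "e = {s e, v}" using ab sQ(1)[OF h] v(1) vs by auto
    thus ?thesis using vs v by blast
  qed
  \<comment> \<open>(3) no augmenting path of length 5\<close>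
  have aug3: "w {s e, s e'} = 1" if h: "e \<in> Q" "e' \<in> Q" "e \<noteq> e'" for e e'
  proof -
    have eN: "e \<in> N" "e' \<in> N" using h QN by auto
    have dee: "e \<inter> e' = {}" using Nd eN h(3) by blast
    obtain t where t: "e = {s e, t}" "t \<noteq> s e" "2 \<le> card (X t)" using other[OF h(1)] by blast
    obtain t' where t': "e' = {s e', t'}" "t' \<noteq> s e'" "2 \<le> card (X t')" using other[OF h(2)] by blast
    have dist: "s e \<noteq> s e'" "s e \<noteq> t'" "t \<noteq> s e'" "t \<noteq> t'" using dee t(1) t'(1) by auto
    have inV: "s e \<in> V1" "t \<in> V1" "s e' \<in> V1" "t' \<in> V1" using eV1[OF eN(1)] eV1[OF eN(2)] t(1) t'(1) by auto
    have lt: "s e < n" "t < n" "s e' < n" "t' < n" using inV V1sub by auto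
    have K: "{s e, s e'} \<in> Kn_edges n" using dist lt by (intro doubleton_Kn) auto
    show ?thesis
    proof (rule ccontr)
      assume "w {s e, s e'} \<noteq> 1"
      hence w0: "w {s e, s e'} = 0" using w01[OF K] by simp
      have "X t' \<noteq> {}" using t'(3) by auto
      then obtain y where y: "y \<in> X t'" by blast
      have "card (X t - {y}) \<ge> 1" using t(3) finX[of t] by (simp add: card_Diff_singleton_if) linarith
      hence "X t - {y} \<noteq> {}" by (metis card.empty not_one_le_zero)
      then obtain x where x: "x \<in> X t" "x \<noteq> y" by blast
      have xU: "x \<in> U" "y \<in> U" using x y XU by auto
      have xn: "x < n" "y < n" "x \<notin> V1" "y \<notin> V1" using xU inU by auto
      have ne: "x \<noteq> t" "x \<noteq> s e" "x \<noteq> s e'" "x \<noteq> t'" "y \<noteq> t" "y \<noteq> s e" "y \<noteq> s e'" "y \<noteq> t'"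
        using inV xn by metis+
      have wxt: "w {x,t} = 0" using x(1) unfolding X_def by (simp add: insert_commute)
      have wyt: "w {t',y} = 0" using y unfolding X_def by simp
      have dis: "\<forall>f\<in>N - {e,e'}. s e \<notin> f \<and> t \<notin> f \<and> s e' \<notin> f \<and> t' \<notin> f \<and> x \<notin> f \<and> y \<notin> f"
      proof
        fix f assume f: "f \<in> N - {e,e'}"
        hence "f \<inter> e = {}" "f \<inter> e' = {}" using Nd eN by blast+
        moreover have "f \<subseteq> V1" using f eV1 by blast
        ultimately show "s e \<notin> f \<and> t \<notin> f \<and> s e' \<notin> f \<and> t' \<notin> f \<and> x \<notin> f \<and> y \<notin> f"
          using t(1) t'(1) xn by blast
      qed
      have c3: "card {{x,t}, {s e, s e'}, {t',y}} = 3"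
        using ne dist x(2) by (auto simp: doubleton_eq_iff)
      have c2: "card {e,e'} = 2" using h(3) by simp
      show False
      proof (rule noaug[of "{e,e'}" "{{x,t}, {s e, s e'}, {t',y}}"])
        show "{e, e'} \<subseteq> N" using eN by simp
        show "{{x,t}, {s e, s e'}, {t',y}} \<subseteq> Kn_edges n" using ne dist lt xn by (auto intro: doubleton_Kn)
        show "\<forall>a\<in>{{x,t}, {s e, s e'}, {t',y}}. w a = 0" using wxt wyt w0 by simp
        show "\<forall>a\<in>{{x,t}, {s e, s e'}, {t',y}}. \<forall>b\<in>{{x,t}, {s e, s e'}, {t',y}}. a \<noteq> b \<longrightarrow> a \<inter> b = {}"
          using ne dist x(2) t(2) t'(2) by auto
        show "\<forall>a\<in>{{x,t}, {s e, s e'}, {t',y}}. \<forall>f\<in>N - {e, e'}. a \<inter> f = {}" using dis by auto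
        show "finite {{x,t}, {s e, s e'}, {t',y}}" by simp
        show "card {e, e'} < card {{x,t}, {s e, s e'}, {t',y}}" using c2 c3 by simp
      qed
    qed
  qed
  define u where "u = card U"
  define c where "c v = card (U - X v)" for v
  have cX: "c v = u - card (X v)" for v unfolding c_def u_def using finX XU by (simp add: card_Diff_subset)
  have peredge: "(if e \<in> Q then u else 2*u - 2) \<le> sum c e" if eN: "e \<in> N" for e
  proof -
    obtain a b where ab: "e = {a,b}" "a \<noteq> b" using edge2[OF eN] by blast
    have se: "sum c e = c a + c b" using ab by simp
    show ?thesis
    proof (cases "e \<in> Q")
      case True
      then obtain v where v: "v \<in> e" "X v = {}" using Qempty by blast
      have "c v = u" using v cX by simp
      moreover have "v = a \<or> v = b" using v ab by auto
      ultimately show ?thesis using True se by auto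
    next
      case False
      hence "\<not> 2 \<le> card (X a)" "\<not> 2 \<le> card (X b)" using eN ab unfolding Q_def by auto
      hence "c a \<ge> u - 1" "c b \<ge> u - 1" using cX by auto
      thus ?thesis using False se by auto
    qed
  qed
  have sumV1: "sum c V1 = sum (sum c) N" unfolding V1_def
    using sum.Union_disjoint[of N c] efin Nd by auto
  have sumbound: "card Q * u + (card N - card Q) * (2*u - 2) \<le> sum c V1"
  proof -
    have "sum (\<lambda>e. if e \<in> Q then u else 2*u - 2) N \<le> sum (sum c) N"
      using peredge by (intro sum_mono) auto
    moreover have "sum (\<lambda>e. if e \<in> Q then u else 2*u - 2) N
        = sum (\<lambda>_. u) (N \<inter> {e. e \<in> Q}) + sum (\<lambda>_. 2*u - 2) (N \<inter> - {e. e \<in> Q})"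
      using finN by (rule sum.If_cases)
    moreover have "N \<inter> {e. e \<in> Q} = Q" using QN by auto
    moreover have "N \<inter> - {e. e \<in> Q} = N - Q" by auto
    moreover have "card (N - Q) = card N - card Q" using QN finN by (simp add: card_Diff_subset finite_subset)
    ultimately show ?thesis using sumV1 by simp
  qed
  define F1 where "F1 = {S. S \<subseteq> U \<and> card S = 2}"
  define F2 where "F2 = (\<lambda>(v,x). {v,x}) ` (SIGMA v:V1. U - X v)"
  define F3 where "F3 = {S. S \<subseteq> s ` Q \<and> card S = 2}"
  have cF1: "card F1 = u choose 2" unfolding F1_def u_def using finU by (rule n_subsets)
  have injs: "inj_on s Q"
  proof
    fix e e' assume h: "e \<in> Q" "e' \<in> Q" "s e = s e'"
    show "e = e'"
    proof (rule ccontr)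
      assume "e \<noteq> e'"
      hence "e \<inter> e' = {}" using Nd h QN by blast
      thus False using sQ(1)[OF h(1)] sQ(1)[OF h(2)] h(3) by auto
    qed
  qed
  have finQ: "finite Q" using QN finN finite_subset by blast
  have cF3: "card F3 = card Q choose 2"
  proof -
    have "card F3 = card (s ` Q) choose 2" unfolding F3_def using finQ by (intro n_subsets) simp
    thus ?thesis using card_image[OF injs] by simp
  qed
  have injF2: "inj_on (\<lambda>(v,x). {v,x}) (SIGMA v:V1. U - X v)"
  proof
    fix p p' assume h: "p \<in> (SIGMA v:V1. U - X v)" "p' \<in> (SIGMA v:V1. U - X v)"
      "(\<lambda>(v,x). {v,x}) p = (\<lambda>(v,x). {v,x}) p'"
    obtain v x where p: "p = (v,x)" "v \<in> V1" "x \<in> U" using h(1) by auto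
    obtain v' x' where p': "p' = (v',x')" "v' \<in> V1" "x' \<in> U" using h(2) by auto
    have eq: "{v,x} = {v',x'}" using h(3) p p' by simp
    have "v \<notin> U" "v' \<notin> U" using p p' unfolding U_def by auto
    hence "v = v' \<and> x = x'" using eq p p' by (auto simp: doubleton_eq_iff)
    thus "p = p'" using p p' by simp
  qed
  have finS: "finite (SIGMA v:V1. U - X v)" using finV1 finU by auto
  have cF2: "card F2 = sum c V1" unfolding F2_def c_def
    using card_image[OF injF2] finV1 finU by simp
  have finF1: "finite F1" unfolding F1_def using finU by simp
  have finF2: "finite F2" unfolding F2_def using finS by simp
  have finF3: "finite F3" unfolding F3_def using finQ by simp
  have sV1: "s e \<in> V1" if "e \<in> Q" for e using sQ(1)[OF that] eV1 QN that by blast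
  have F1p: "S \<in> Kn_edges n \<and> w S = 1" if hS: "S \<in> F1" for S
  proof -
    obtain x y where xy: "S = {x,y}" "x \<noteq> y" using hS unfolding F1_def card_2_iff by blast
    have "x \<in> U" "y \<in> U" using hS xy unfolding F1_def by auto
    thus ?thesis using xy Ucl inU by (auto intro: doubleton_Kn)
  qed
  have F2p: "S \<in> Kn_edges n \<and> w S = 1" if hS: "S \<in> F2" for S
  proof -
    obtain v x where vx: "S = {v,x}" "v \<in> V1" "x \<in> U" "x \<notin> X v" using hS unfolding F2_def by auto
    have ne: "v \<noteq> x" using vx inU by auto
    have K: "S \<in> Kn_edges n" using vx ne inU V1sub by (auto intro: doubleton_Kn)
    have "w S \<noteq> 0" using vx unfolding X_def by auto
    thus ?thesis using K w01[OF K] by simp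
  qed
  have F3p: "S \<in> Kn_edges n \<and> w S = 1" if hS: "S \<in> F3" for S
  proof -
    obtain a b where ab: "S = {a,b}" "a \<noteq> b" using hS unfolding F3_def card_2_iff by blast
    have "a \<in> s ` Q" "b \<in> s ` Q" using hS ab unfolding F3_def by auto
    then obtain e e' where ee: "e \<in> Q" "e' \<in> Q" "a = s e" "b = s e'" by blast
    have "e \<noteq> e'" using ee ab by auto
    hence "w S = 1" using aug3[OF ee(1,2)] ee ab by simp
    moreover have "S \<in> Kn_edges n" using ab ee sV1 V1sub by (auto intro: doubleton_Kn)
    ultimately show ?thesis by simp
  qed
  have UV: "U \<inter> V1 = {}" unfolding U_def by auto
  have d12: "F1 \<inter> F2 = {}"
  proof -
    have "S \<notin> F1" if "S \<in> F2" for S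
    proof -
      obtain v x where vx: "S = {v,x}" "v \<in> V1" using \<open>S \<in> F2\<close> unfolding F2_def by auto
      thus ?thesis using UV unfolding F1_def by auto
    qed
    thus ?thesis by blast
  qed
  have F3V: "S \<subseteq> V1" if "S \<in> F3" for S using that sV1 unfolding F3_def by auto
  have d3: "(F1 \<union> F2) \<inter> F3 = {}"
  proof -
    have "S \<notin> F1 \<union> F2" if "S \<in> F3" for S
    proof
      assume "S \<in> F1 \<union> F2"
      then consider "S \<in> F1" | "S \<in> F2" by blast
      then show False
      proof cases
        case 1
        hence "S \<subseteq> U" "S \<noteq> {}" unfolding F1_def by auto
        thus False using F3V[OF that] UV by auto
      next
        case 2
        then obtain v x where "S = {v,x}" "x \<in> U" unfolding F2_def by auto
        thus False using F3V[OF that] UV by auto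
      qed
    qed
    thus ?thesis by blast
  qed
  define G where "G = F1 \<union> F2 \<union> F3"
  have cG: "card G = card F1 + card F2 + card F3" unfolding G_def
    using d12 d3 finF1 finF2 finF3 by (simp add: card_Un_disjoint)
  have Gp: "G \<subseteq> Kn_edges n" "\<forall>S\<in>G. w S = 1" unfolding G_def using F1p F2p F3p by blast+
  have "card G = sum w G" using Gp(2) by simp
  also have "\<dots> \<le> sum w (Kn_edges n)" using Gp(1) finite_Kn by (intro sum_mono2) auto
  finally have Gw: "card G \<le> weight w (Kn_edges n)" unfolding weight_def .
  have LB: "(u choose 2) + card Q * u + (card N - card Q) * (2*u - 2) + (card Q choose 2) \<le> weight w (Kn_edges n)"
    using Gw cG cF1 cF2 cF3 sumbound by linarith
  obtain P where P: "\<forall>p\<in>P. p \<subseteq> U \<and> card p = 2" "\<forall>p\<in>P. \<forall>p'\<in>P. p \<noteq> p' \<longrightarrow> p \<inter> p' = {}"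
    "card P = card U div 2" "finite P" using exists_pairing[OF finU] by blast
  define M where "M = N \<union> P"
  have PK: "P \<subseteq> Kn_edges n" using P(1) unfolding Kn_edges_def U_def by auto
  have NP: "e \<inter> p = {}" if "e \<in> N" "p \<in> P" for e p using eV1[OF that(1)] P(1) that(2) UV by blast
  have NPd: "N \<inter> P = {}"
  proof -
    have "p \<noteq> {}" if "p \<in> P" for p using P(1) that by auto
    thus ?thesis using NP by blast
  qed
  have cM: "card M = n div 2"
  proof -
    have "card M = card N + card P" unfolding M_def using NPd finN P(4) by (simp add: card_Un_disjoint)
    thus ?thesis using P(3) nsplit by simp
  qed
  have om: "optimal_matching n M" unfolding optimal_matching_def
  proof (intro conjI ballI impI)
    show "M \<subseteq> Kn_edges n" unfolding M_def using NK PK by blast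
    show "card M = n div 2" by (rule cM)
    fix e f assume h: "e \<in> M" "f \<in> M" "e \<noteq> f"
    consider "e \<in> N" "f \<in> N" | "e \<in> N" "f \<in> P" | "e \<in> P" "f \<in> N" | "e \<in> P" "f \<in> P"
      using h(1,2) unfolding M_def by blast
    then show "e \<inter> f = {}"
    proof cases
      case 1 then show ?thesis using Nd h(3) by blast
    next
      case 2 then show ?thesis using NP by blast
    next
      case 3
      hence "f \<inter> e = {}" using NP by blast
      thus ?thesis by (simp add: Int_commute)
    next
      case 4 then show ?thesis using P(2) h(3) by blast
    qed
  qed
  have wM: "weight w M \<le> u div 2"
  proof -
    have "weight w M = sum w N + sum w P" unfolding weight_def M_def
      using NPd finN P(4) by (simp add: sum.union_disjoint)
    also have "sum w N = 0" using Nw by simp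
    also have "sum w P \<le> sum (\<lambda>_. 1) P" using PK w01 by (intro sum_mono) fastforce
    finally show ?thesis using P(3) unfolding u_def by simp
  qed
  have qv: "card Q \<le> card N" using QN finN by (rule card_mono[rotated])
  show ?thesis
    by (rule exI[of _ M], rule exI[of _ u], rule exI[of _ "card N"], rule exI[of _ "card Q"])
       (use om wM nsplit qv LB u_def in simp)
qed


lemma arith_final:
  fixes n u v q :: nat and d :: real
  assumes hn: "n = 2*v+u" "q \<le> v" "n \<ge> 5" "0 \<le> d" "d \<le> 1"
    and hP: "d*(real n*(real n-1)/2) \<ge> real u*(real u-1)/2 + real q*real u + (real v - real q)*(2*real u-2) + real q*(real q-1)/2"
  shows "real u / 2 \<le> f_bound n d"
proof -
  have N: "real n = 2*real v + real u" "0 \<le> real q" "real q \<le> real v" "0 \<le> real u" "real n \<ge> 5"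
    using hn by auto
  have V: "real v = 0 \<or> real v \<ge> 1" by (cases v) auto
  show ?thesis
  proof (cases "d \<le> 9/25")
    case True
    have "real u \<le> 3/4*d*real n + 2" using caseA[OF N True hn(4) hP] .
    thus ?thesis unfolding f_bound_def using True by simp
  next
    case False
    hence d: "d > 9/25" by simp
    have "real u \<le> d*real n - (1-d)^2*real n/4 + 2" using caseB[OF N d hn(5) V hP] .
    thus ?thesis unfolding f_bound_def using False by (simp add: mult.commute)
  qed
qed

theorem proposition5p2:
  fixes n :: nat and w :: "nat set \<Rightarrow> nat" and d :: real
  assumes "n \<ge> 1"
    and "zero_one_instance n w"
    and "0 \<le> d" and "d \<le> 1"
    and "real (weight w (Kn_edges n)) = d * real (n choose 2)"
    and "1 / real n \<le> d" and "d \<le> 1 - 4 / real n"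
  shows "\<exists>M. optimal_matching n M \<and> real (weight w M) \<le> f_bound n d"
proof -
  obtain M u v q where M: "optimal_matching n M" "weight w M \<le> u div 2" "n = 2*v + u" "q \<le> v"
    "(u choose 2) + q*u + (v - q)*(2*u - 2) + (q choose 2) \<le> weight w (Kn_edges n)"
    using main_comb[OF assms(2)] by blast
  have npos: "real n > 0" using assms(1) by simp
  have "1 / real n \<le> 1 - 4 / real n" using assms(6,7) by linarith
  hence "5 / real n \<le> 1" by (simp add: field_simps)
  hence n5: "n \<ge> 5" using npos by (simp add: divide_le_eq)
  have LBr: "real u*(real u-1)/2 + real q*real u + (real v - real q)*(2*real u-2) + real q*(real q-1)/2
      \<le> real (weight w (Kn_edges n))"
  proof -
    have "real (v - q) * real (2*u - 2) \<ge> (real v - real q)*(2*real u - 2)"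
    proof -
      have "real (v - q) = real v - real q" using M(4) by simp
      moreover have "real (2*u - 2) \<ge> 2*real u - 2" by linarith
      moreover have "real v - real q \<ge> 0" using M(4) by simp
      ultimately show ?thesis by (simp add: mult_left_mono)
    qed
    moreover have "real ((u choose 2) + q*u + (v - q)*(2*u - 2) + (q choose 2))
        = real u*(real u-1)/2 + real q*real u + real (v - q) * real (2*u - 2) + real q*(real q-1)/2"
      by (simp add: real_choose2)
    moreover have "real ((u choose 2) + q*u + (v - q)*(2*u - 2) + (q choose 2)) \<le> real (weight w (Kn_edges n))"
      using M(5) by linarith
    ultimately show ?thesis by linarith
  qed
  have hP: "d*(real n*(real n-1)/2) \<ge> real u*(real u-1)/2 + real q*real u + (real v - real q)*(2*real u-2) + real q*(real q-1)/2"
    using LBr assms(5) by (simp add: real_choose2)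
  have "real u / 2 \<le> f_bound n d" using arith_final[OF M(3,4) n5 assms(3,4) hP] .
  moreover have "real (weight w M) \<le> real u / 2"
  proof -
    have "real (weight w M) \<le> real (u div 2)" using M(2) by simp
    also have "\<dots> \<le> real u / 2" by linarith
    finally show ?thesis .
  qed
  ultimately show ?thesis using M(1) by (intro exI[of _ M]) simp
qed

end
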